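(* Let $X$ be a compact metrizable abelian group, $T$ a continuous automorphism of $X$, and $Y$ a closed subgroup with $TY=Y$. Let $\mathcal{P}\subseteq\mathbb{N}$ have bounded gaps. If both $(Y,T)$ and $(X/Y,T)$ satisfy partial specification with periods $\mathcal{P}$, then $(X,T)$ satisfies partial specification with periods $\mathcal{P}$.
   Context: Let $(Z,R)$ be a compact metrizable space with a homeomorphism, and fix a compatible metric $d_Z$ (the property below does not depend on this choice). For $M\in\mathbb{N}$, an $M$-spaced specification is $\xi=\{(z_i;a_i,b_i)\}_{i=1}^r$ with $z_i\in Z$ and integers $0\le a_1<b_1<\cdots<a_r<b_r$, $a_{i+1}-b_i\ge M$. For $\varepsilon>0$, $\xi$ is $\varepsilon$-partially traced by $w\in Z$ if for each $i$, $|\{a_i\le n<b_i: d_Z(R^nz_i,R^nw)<\varepsilon\}|>(1-\varepsilon)(b_i-a_i)$. $(Z,R)$ satisfies partial specification with periods $\mathcal{P}$ if for every $\varepsilon>0$ there exist $N,M\in\mathbb{N}$ such that for every $M$-spaced specification $\xi$ and every $n\in\mathcal{P}$ with $n\ge\max\{N,(1+\varepsilon)b_r\}$ there exists $w\in Z$ with $R^nw=w$ that $\varepsilon$-partially traces $\xi$. Here $T$ denotes also its restriction to $Y$ and the induced automorphism of $X/Y$. *)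

theory Defs
  imports "HOL-Analysis.Analysis"
begin

text \<open>Specifications are indexed
  0-based: points z i, intervals [a i, b i) for i < r, with r \<ge> 1.\<close>

definition spaced_spec ::
  "'a set \<Rightarrow> nat \<Rightarrow> nat \<Rightarrow> (nat \<Rightarrow> 'a) \<Rightarrow> (nat \<Rightarrow> nat) \<Rightarrow> (nat \<Rightarrow> nat) \<Rightarrow> bool" where
  "spaced_spec S M r z a b \<longleftrightarrow>
     r \<ge> 1 \<and> (\<forall>i<r. z i \<in> S \<and> a i < b i) \<and>
     (\<forall>i. Suc i < r \<longrightarrow> b i < a (Suc i) \<and> b i + M \<le> a (Suc i))"

definition partially_traces ::
  "('a \<Rightarrow> 'a) \<Rightarrow> ('a \<Rightarrow> 'a \<Rightarrow> real) \<Rightarrow> real \<Rightarrow> nat \<Rightarrow> (nat \<Rightarrow> 'a) \<Rightarrow> (nat \<Rightarrow> nat) \<Rightarrow> (nat \<Rightarrow> nat) \<Rightarrow> 'a \<Rightarrow> bool" where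
  "partially_traces R d \<epsilon> r z a b w \<longleftrightarrow>
     (\<forall>i<r. real (card {n \<in> {a i..<b i}. d ((R ^^ n) (z i)) ((R ^^ n) w) < \<epsilon>})
              > (1 - \<epsilon>) * real (b i - a i))"

definition partial_specification ::
  "'a set \<Rightarrow> ('a \<Rightarrow> 'a) \<Rightarrow> ('a \<Rightarrow> 'a \<Rightarrow> real) \<Rightarrow> nat set \<Rightarrow> bool" where
  "partial_specification S R d P \<longleftrightarrow>
     (\<forall>\<epsilon>>0. \<exists>N M::nat. \<forall>r z a b. spaced_spec S M r z a b \<longrightarrow>
        (\<forall>n\<in>P. n \<ge> N \<and> real n \<ge> (1 + \<epsilon>) * real (b (r - 1)) \<longrightarrow>
           (\<exists>w\<in>S. (R ^^ n) w = w \<and> partially_traces R d \<epsilon> r z a b w)))"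

definition bounded_gaps :: "nat set \<Rightarrow> bool" where
  "bounded_gaps P \<longleftrightarrow> (\<exists>K. \<forall>m. \<exists>p\<in>P. m \<le> p \<and> p < m + K)"

text \<open>Hausdorff distance (a compatible metric on the space of cosets of a compact subgroup).\<close>
definition hausdorff_dist :: "'a::metric_space set \<Rightarrow> 'a set \<Rightarrow> real" where
  "hausdorff_dist A B = max (SUP x\<in>A. infdist x B) (SUP y\<in>B. infdist y A)"

text \<open>The quotient X/Y as the set of cosets, with the induced automorphism acting by images.\<close>
definition cosets :: "'a::ab_group_add set \<Rightarrow> 'a set set" where
  "cosets Y = range (\<lambda>x. (\<lambda>y. x + y) ` Y)"

end

theory Submission
  imports Defs
begin


lemma funpow_image_iter: fixes f :: "'a \<Rightarrow> 'a" shows "((\<lambda>C. f ` C) ^^ k) C = (f ^^ k) ` C"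
proof (induction k)
  case (Suc k)
  have "((\<lambda>C. f ` C) ^^ Suc k) C = f ` (((\<lambda>C. f ` C) ^^ k) C)" by simp
  also have "\<dots> = (f ^^ Suc k) ` C" using Suc by (simp add: image_image)
  finally show ?case .
qed simp

lemma additive_minus:
  fixes f :: "'a::ab_group_add \<Rightarrow> 'b::ab_group_add"
  assumes "\<forall>x y. f (x + y) = f x + f y"
  shows "f (x - y) = f x - f y"
proof -
  have "f x = f ((x - y) + y)" by simp
  also have "\<dots> = f (x - y) + f y" using assms by blast
  finally show ?thesis by (simp add: algebra_simps)
qed

lemma funpow_additive:
  fixes f :: "'a::ab_group_add \<Rightarrow> 'a"
  assumes "\<forall>x y. f (x + y) = f x + f y"
  shows "\<forall>x y. (f ^^ k) (x + y) = (f ^^ k) x + (f ^^ k) y"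
  using assms by (induction k) auto

lemma funpow_image_eq:
  assumes "f ` Y = Y" shows "(f ^^ k) ` Y = Y"
proof (induction k)
  case (Suc k)
  have "(f ^^ Suc k) ` Y = f ` ((f ^^ k) ` Y)" by (simp add: image_image)
  then show ?case using Suc assms by simp
qed simp

lemma funpow_continuous:
  fixes f :: "'a::topological_space \<Rightarrow> 'a"
  assumes "continuous_on UNIV f" shows "continuous_on UNIV (f ^^ k)"
proof (induction k)
  case 0 then show ?case by (simp add: funpow_0 continuous_on_id')
next
  case (Suc k)
  have "f ^^ Suc k = f \<circ> (f ^^ k)" by simp
  then show ?case using Suc assms
    by (metis continuous_on_compose continuous_on_subset subset_UNIV)
qed

lemma bounded_gaps_unbounded:
  assumes "bounded_gaps P" shows "\<exists>p\<in>P. m \<le> p"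
  using assms unfolding bounded_gaps_def by blast

lemma spaced_chain:
  assumes "spaced_spec S M r z a b" "i < i'" "i' < r"
  shows "b i < a i' \<and> b i + M \<le> a i'"
  using assms(2,3)
proof (induction i' rule: less_induct)
  case (less i')
  then obtain k where k: "i' = Suc k" by (cases i') auto
  have sp: "b k < a i' \<and> b k + M \<le> a i'"
    using assms(1) less.prems k unfolding spaced_spec_def by auto
  show ?case
  proof (cases "i = k")
    case True then show ?thesis using sp by simp
  next
    case False
    then have "b i < a k \<and> b i + M \<le> a k" using less k by auto
    moreover have "a k < b k" using assms(1) less.prems k unfolding spaced_spec_def by auto
    ultimately show ?thesis using sp by auto
  qed
qed

lemma spaced_mono_b:
  assumes "spaced_spec S M r z a b" "i < r" "i' < r" "i \<le> i'"
  shows "b i \<le> b i'"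
proof (cases "i = i'")
  case False
  then have "b i < a i'" using spaced_chain[OF assms(1)] assms by auto
  moreover have "a i' < b i'" using assms unfolding spaced_spec_def by auto
  ultimately show ?thesis by simp
qed simp

lemma spec_family:
  fixes J :: "'j set" and s e :: "'j \<Rightarrow> nat" and z :: "'j \<Rightarrow> 'a"
  assumes H: "\<forall>r z a b. spaced_spec S M r z a b \<longrightarrow>
        (\<forall>n\<in>P. n \<ge> N \<and> real n \<ge> (1 + \<epsilon>) * real (b (r - 1)) \<longrightarrow>
           (\<exists>w\<in>S. (R ^^ n) w = w \<and> partially_traces R d \<epsilon> r z a b w))"
    and eps: "\<epsilon> > 0"
    and fin: "finite J" "J \<noteq> {}"
    and zs: "\<forall>j\<in>J. z j \<in> S \<and> s j < e j \<and> e j \<le> B"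
    and sp: "\<forall>j\<in>J. \<forall>j'\<in>J. s j < s j' \<longrightarrow> e j < s j' \<and> e j + M \<le> s j'"
    and inj: "inj_on s J"
    and n: "n \<in> P" "n \<ge> N" "real n \<ge> (1 + \<epsilon>) * real B"
  shows "\<exists>w\<in>S. (R ^^ n) w = w \<and> (\<forall>j\<in>J. real (card {k \<in> {s j..<e j}. d ((R ^^ k) (z j)) ((R ^^ k) w) < \<epsilon>})
              > (1 - \<epsilon>) * real (e j - s j))"
proof -
  define A where "A = s ` J"
  define L where "L = sorted_list_of_set A"
  define r where "r = length L"
  define idx where "idx k = inv_into J s (L ! k)" for k
  have finA: "finite A" using fin A_def by simp
  have setL: "set L = A" using finA L_def by simp
  have ssL: "sorted_wrt (<) L" using L_def by simp
  have r1: "r \<ge> 1" using fin setL r_def A_def by (cases L) auto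
  have idxJ: "idx k \<in> J" if "k < r" for k
    using that setL r_def idx_def A_def by (metis inv_into_into nth_mem)
  have sidx: "s (idx k) = L ! k" if "k < r" for k
    using that setL r_def idx_def A_def by (metis f_inv_into_f nth_mem)
  have spc: "spaced_spec S M r (\<lambda>k. z (idx k)) (\<lambda>k. s (idx k)) (\<lambda>k. e (idx k))"
  proof -
    have c2: "\<forall>k<r. z (idx k) \<in> S \<and> s (idx k) < e (idx k)" using zs idxJ by auto
    have c3: "e (idx k) < s (idx (Suc k)) \<and> e (idx k) + M \<le> s (idx (Suc k))" if k: "Suc k < r" for k
    proof -
      have "L ! k < L ! Suc k" using ssL k r_def by (simp add: sorted_wrt_nth_less)
      then have "s (idx k) < s (idx (Suc k))" using sidx k by simp
      then show ?thesis using sp idxJ[of k] idxJ[of "Suc k"] k by (meson Suc_lessD)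
    qed
    show ?thesis unfolding spaced_spec_def using r1 c2 c3 by simp
  qed
  have "real n \<ge> (1 + \<epsilon>) * real (e (idx (r - 1)))"
  proof -
    have "e (idx (r - 1)) \<le> B" using zs idxJ r1 by auto
    then have "(1 + \<epsilon>) * real (e (idx (r - 1))) \<le> (1 + \<epsilon>) * real B"
      using eps by (intro mult_left_mono) auto
    then show ?thesis using n by linarith
  qed
  then obtain w where w: "w \<in> S" "(R ^^ n) w = w"
    "partially_traces R d \<epsilon> r (\<lambda>k. z (idx k)) (\<lambda>k. s (idx k)) (\<lambda>k. e (idx k)) w"
    using H spc n by blast
  show ?thesis
  proof (intro bexI[OF _ w(1)] conjI w(2) ballI)
    fix j assume j: "j \<in> J"
    then have "s j \<in> set L" using setL A_def by simp
    then obtain k where k: "k < r" "L ! k = s j" using r_def by (metis in_set_conv_nth)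
    have "idx k = j" using k j inj idx_def by (simp add: inv_into_f_f)
    moreover have "real (card {n \<in> {s (idx k)..<e (idx k)}. d ((R ^^ n) (z (idx k))) ((R ^^ n) w) < \<epsilon>})
              > (1 - \<epsilon>) * real (e (idx k) - s (idx k))"
      using w(3) k(1) unfolding partially_traces_def by blast
    ultimately show "real (card {k \<in> {s j..<e j}. d ((R ^^ k) (z j)) ((R ^^ k) w) < \<epsilon>})
              > (1 - \<epsilon>) * real (e j - s j)" by simp
  qed
qed



lemma uc_op:
  fixes f :: "'x::metric_space \<Rightarrow> 'x \<Rightarrow> 'y::metric_space"
  assumes cpt: "compact (UNIV :: 'x set)"
    and cont: "continuous_on UNIV (\<lambda>p. f (fst p) (snd p))"
    and e: "e > 0"
  shows "\<exists>d>0. \<forall>x x' y y'. dist x x' < d \<longrightarrow> dist y y' < d \<longrightarrow> dist (f x y) (f x' y') < e"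
proof -
  have "compact (UNIV \<times> UNIV :: ('x \<times> 'x) set)" using compact_Times[OF cpt cpt] .
  then have c2: "compact (UNIV :: ('x \<times> 'x) set)" by simp
  have "uniformly_continuous_on UNIV (\<lambda>p. f (fst p) (snd p))"
    by (rule compact_uniformly_continuous[OF cont c2])
  then obtain d where d: "d > 0" and
    H: "\<forall>p\<in>UNIV. \<forall>p'\<in>UNIV. dist p' p < d \<longrightarrow>
        dist (f (fst p') (snd p')) (f (fst p) (snd p)) < e"
    using e unfolding uniformly_continuous_on_def by metis
  show ?thesis
  proof (intro exI[of _ "d/2"] conjI allI impI)
    show "d / 2 > 0" using d by simp
    fix x x' y y' :: 'x
    assume a: "dist x x' < d/2" "dist y y' < d/2"
    have "dist (x, y) (x', y') = sqrt ((dist x x')\<^sup>2 + (dist y y')\<^sup>2)" by (rule dist_Pair_Pair)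
    also have "\<dots> \<le> dist x x' + dist y y'" by (rule sqrt_sum_squares_le_sum) auto
    also have "\<dots> < d" using a by simp
    finally have "dist (x, y) (x', y') < d" .
    then show "dist (f x y) (f x' y') < e" using H by (simp add: dist_commute)
  qed
qed

lemma uc_add:
  fixes e :: real
  assumes cpt: "compact (UNIV :: 'x::{topological_ab_group_add, metric_space} set)" and e: "e > 0"
  shows "\<exists>d>0. \<forall>x x' y y' :: 'x. dist x x' < d \<longrightarrow> dist y y' < d \<longrightarrow> dist (x + y) (x' + y') < e"
proof -
  have "continuous_on UNIV (\<lambda>p::'x\<times>'x. fst p + snd p)"
    by (intro continuous_intros)
  then show ?thesis using uc_op[OF cpt _ e, of "(+)"] by simp
qed

lemma uc_diff:
  fixes e :: real
  assumes cpt: "compact (UNIV :: 'x::{topological_ab_group_add, metric_space} set)" and e: "e > 0"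
  shows "\<exists>d>0. \<forall>x x' y y' :: 'x. dist x x' < d \<longrightarrow> dist y y' < d \<longrightarrow> dist (x - y) (x' - y') < e"
proof -
  have "continuous_on UNIV (\<lambda>p::'x\<times>'x. fst p - snd p)"
    by (intro continuous_intros)
  then show ?thesis using uc_op[OF cpt _ e, of "(-)"] by simp
qed

lemma funpow_continuous_aux:
  fixes f :: "'a::topological_space \<Rightarrow> 'a"
  assumes "continuous_on UNIV f" shows "continuous_on UNIV (f ^^ k)"
proof (induction k)
  case 0 then show ?case by (simp add: funpow_0 continuous_on_id')
next
  case (Suc k)
  have "f ^^ Suc k = f \<circ> (f ^^ k)" by simp
  then show ?case using Suc assms
    by (metis continuous_on_compose continuous_on_subset subset_UNIV)
qed

lemma equicont:
  fixes T :: "'a::metric_space \<Rightarrow> 'a"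
  assumes cpt: "compact (UNIV :: 'a set)" and cont: "continuous_on UNIV T" and eta: "\<eta> > 0"
  shows "\<exists>\<delta>>0. \<forall>p q :: 'a. dist p q < \<delta> \<longrightarrow> (\<forall>k<l. dist ((T ^^ k) p) ((T ^^ k) q) < \<eta>)"
proof (induction l)
  case 0 then show ?case by (intro exI[of _ 1]) auto
next
  case (Suc l)
  then obtain d1 where d1: "d1 > 0" "\<forall>p q :: 'a. dist p q < d1 \<longrightarrow> (\<forall>k<l. dist ((T ^^ k) p) ((T ^^ k) q) < \<eta>)"
    by blast
  have "uniformly_continuous_on UNIV (T ^^ l)"
    using cpt funpow_continuous_aux[OF cont] by (intro compact_uniformly_continuous)
  then obtain d2 where d2: "d2 > 0" "\<forall>p q :: 'a. dist p q < d2 \<longrightarrow> dist ((T ^^ l) p) ((T ^^ l) q) < \<eta>"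
    using eta unfolding uniformly_continuous_on_def by (metis UNIV_I dist_commute)
  show ?case
  proof (intro exI[of _ "min d1 d2"] conjI allI impI)
    show "min d1 d2 > 0" using d1 d2 by simp
    fix p q :: 'a and k assume "dist p q < min d1 d2" "k < Suc l"
    then show "dist ((T ^^ k) p) ((T ^^ k) q) < \<eta>" using d1 d2
      by (cases "k = l") auto
  qed
qed

lemma hausdorff_close:
  fixes A B :: "'a::metric_space set"
  assumes cpt: "compact (UNIV :: 'a set)" and x: "x \<in> A" and B: "B \<noteq> {}"
    and h: "hausdorff_dist A B < e"
  shows "\<exists>q\<in>B. dist x q < e"
proof -
  obtain c :: 'a and D where cD: "\<forall>y. dist c y \<le> D"
    using compact_imp_bounded[OF cpt] unfolding bounded_def by auto
  obtain b0 where b0: "b0 \<in> B" using B by blast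
  have "bdd_above ((\<lambda>x. infdist x B) ` A)"
  proof (rule bdd_aboveI2)
    fix y
    have "infdist y B \<le> dist y b0" using b0 by (rule infdist_le)
    also have "\<dots> \<le> dist c y + dist c b0" by (rule dist_triangle3)
    also have "\<dots> \<le> 2 * D" using cD[rule_format, of y] cD[rule_format, of b0] by simp
    finally show "infdist y B \<le> 2 * D" .
  qed
  then have "infdist x B \<le> (SUP x\<in>A. infdist x B)" using x by (rule cSUP_upper2) simp
  also have "\<dots> \<le> hausdorff_dist A B" unfolding hausdorff_dist_def by simp
  finally have "infdist x B < e" using h by simp
  then have "(INF a\<in>B. dist x a) < e" using B by (simp add: infdist_notempty)
  then show ?thesis using B by (subst (asm) cINF_less_iff) (auto intro: bdd_belowI2[of _ 0])
qed



lemma single_time: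
  assumes "real (card {k \<in> {a..<b}. Q k}) > (1 - e) * real (b - a)" "b = Suc a" "e < 1"
  shows "Q a"
proof (rule ccontr)
  assume "\<not> Q a"
  then have "{k \<in> {a..<b}. Q k} = {}" using assms(2) by auto
  then have c0: "card {k \<in> {a..<b}. Q k} = 0" by (simp only: card.empty)
  have "(1 - e) * real (b - a) < 0" using assms(1) unfolding c0 by (metis of_nat_0)
  then show False using assms(2,3) by simp
qed

lemma surj_Tn:
  fixes T :: "'x::{topological_ab_group_add, metric_space} \<Rightarrow> 'x"
  assumes cpt: "compact (UNIV :: 'x set)"
    and add: "\<forall>x y. T (x + y) = T x + T y" and cont: "continuous_on UNIV T"
    and clY: "closed Y" and Y0: "0 \<in> Y" and sub: "\<forall>x\<in>Y. \<forall>y\<in>Y. x - y \<in> Y" and TY: "T ` Y = Y"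
    and unb: "\<forall>m. \<exists>p\<in>P. m \<le> p"
    and PS: "partial_specification Y T dist P"
    and n1: "n \<ge> 1" and cY: "c \<in> Y"
  shows "\<exists>y\<in>Y. (T ^^ n) y - y = c"
proof -
  define F where "F y = (T ^^ n) y - y" for y
  define H where "H = F ` Y"
  have addk: "\<forall>x y. (T ^^ k) (x + y) = (T ^^ k) x + (T ^^ k) y" for k
    using funpow_additive[OF add] by blast
  have minusk: "(T ^^ k) (x - y) = (T ^^ k) x - (T ^^ k) y" for k x y
    using additive_minus[OF addk] by blast
  have Tk0: "(T ^^ k) 0 = 0" for k using minusk[of k 0 0] by simp
  have Ypl: "x + y \<in> Y" if "x \<in> Y" "y \<in> Y" for x y
  proof -
    have "0 - y \<in> Y" using sub Y0 that by blast
    then have "x - (0 - y) \<in> Y" using sub that by blast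
    then show ?thesis by simp
  qed
  have TkY: "(T ^^ k) ` Y = Y" for k using funpow_image_eq[OF TY] .
  have TkYin: "(T ^^ k) y \<in> Y" if "y \<in> Y" for k y using TkY that by blast
  have compY: "compact Y" using cpt clY by (metis compact_Int_closed inf_top_left)
  have "continuous_on Y F" unfolding F_def
    using funpow_continuous[OF cont, of n]
    by (intro continuous_intros) (auto intro: continuous_on_subset)
  then have "compact H" unfolding H_def using compY by (rule compact_continuous_image)
  then have clH: "closed H" by (rule compact_imp_closed)
  have K: "(T ^^ (t * n)) w - w \<in> H" if "w \<in> Y" for t w
  proof (induction t)
    case 0
    have "F 0 = 0" unfolding F_def using Tk0 by simp
    then show ?case using Y0 unfolding H_def by (simp add: image_iff) (metis)
  next
    case (Suc t)
    then obtain y where y: "y \<in> Y" "(T ^^ (t * n)) w - w = F y" unfolding H_def by blast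
    have "(T ^^ (Suc t * n)) w = (T ^^ n) ((T ^^ (t * n)) w)"
      by (simp add: funpow_add)
    then have "(T ^^ (Suc t * n)) w - w = F ((T ^^ (t * n)) w) + F y"
      using y unfolding F_def by (simp add: algebra_simps)
    also have "\<dots> = F ((T ^^ (t * n)) w + y)" unfolding F_def using addk by (simp add: algebra_simps)
    finally show ?case unfolding H_def using Ypl[OF TkYin[OF that] y(1)] by blast
  qed
  have "c \<in> closure H"
    unfolding closure_approachable
  proof (intro allI impI)
    fix \<delta> :: real assume \<delta>: "\<delta> > 0"
    obtain da where da: "da > 0" "\<forall>x x' y y' :: 'x. dist x x' < da \<longrightarrow> dist y y' < da \<longrightarrow> dist (x + y) (x' + y') < \<delta>"
      using uc_add[OF cpt \<delta>] by blast
    obtain db where db: "db > 0" "\<forall>x x' y y' :: 'x. dist x x' < db \<longrightarrow> dist y y' < db \<longrightarrow> dist (x + y) (x' + y') < da"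
      using uc_add[OF cpt da(1)] by blast
    obtain dc where dc: "dc > 0" "\<forall>x x' y y' :: 'x. dist x x' < dc \<longrightarrow> dist y y' < dc \<longrightarrow> dist (x - y) (x' - y') < db"
      using uc_diff[OF cpt db(1)] by blast
    define e0 where "e0 = min (min db dc) (1/2)"
    have e0: "e0 > 0" "e0 \<le> db" "e0 \<le> dc" "e0 \<le> 1/2" using db dc unfolding e0_def by auto
    obtain N0 M0 where NM: "\<forall>r z a b. spaced_spec Y M0 r z a b \<longrightarrow>
        (\<forall>n\<in>P. n \<ge> N0 \<and> real n \<ge> (1 + e0) * real (b (r - 1)) \<longrightarrow>
           (\<exists>w\<in>Y. (T ^^ n) w = w \<and> partially_traces T dist e0 r z a b w))"
      using PS[unfolded partial_specification_def, rule_format, OF e0(1)] by (elim exE) (rule that, assumption)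
    define t where "t = M0 + 2"
    have tn: "t * n \<ge> M0 + 2" unfolding t_def using n1 by (metis mult.right_neutral mult_le_mono2)
    obtain m where m: "m \<in> P" "N0 + 2 * (t * n + 1) \<le> m" using unb by blast
    obtain zc where zc: "zc \<in> Y" "(T ^^ (t * n)) zc = c" using cY TkY[of "t * n"] by (metis imageE)
    define z where "z i = (if i = 0 then 0 else zc)" for i :: nat
    define a where "a i = (if i = 0 then 0 else t * n)" for i :: nat
    define b where "b i = (if i = 0 then 1 else t * n + 1)" for i :: nat
    have spc: "spaced_spec Y M0 2 z a b"
      unfolding spaced_spec_def z_def a_def b_def using Y0 zc tn
      by (auto simp: less_2_cases_iff)
    have hb: "real m \<ge> (1 + e0) * real (b (2 - 1))"
    proof -
      have "(1 + e0) * real (t * n + 1) \<le> 2 * real (t * n + 1)"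
        using e0 by (intro mult_right_mono) auto
      moreover have "2 * real (t * n + 1) \<le> real m" using m(2) by linarith
      ultimately show ?thesis unfolding b_def by simp
    qed
    have n0: "N0 \<le> m" using m(2) by simp
    have "\<exists>w\<in>Y. (T ^^ m) w = w \<and> partially_traces T dist e0 2 z a b w"
      using NM[rule_format, OF spc m(1)] n0 hb by simp
    then obtain w where w: "w \<in> Y" "partially_traces T dist e0 2 z a b w"
      by blast
    have "real (card {k \<in> {a 0..<b 0}. dist ((T ^^ k) (z 0)) ((T ^^ k) w) < e0}) > (1 - e0) * real (b 0 - a 0)"
      using w(2) unfolding partially_traces_def by simp
    then have "dist ((T ^^ (a 0)) (z 0)) ((T ^^ (a 0)) w) < e0"
      by (rule single_time) (use e0 in \<open>simp_all add: a_def b_def\<close>)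
    then have w0: "dist 0 w < e0" unfolding a_def z_def by simp
    have "real (card {k \<in> {a 1..<b 1}. dist ((T ^^ k) (z 1)) ((T ^^ k) w) < e0}) > (1 - e0) * real (b 1 - a 1)"
      using w(2) unfolding partially_traces_def by simp
    then have "dist ((T ^^ (a 1)) (z 1)) ((T ^^ (a 1)) w) < e0"
      by (rule single_time) (use e0 in \<open>simp_all add: a_def b_def\<close>)
    then have "dist ((T ^^ (t * n)) zc) ((T ^^ (t * n)) w) < e0" unfolding a_def z_def by simp
    then have w1: "dist c ((T ^^ (t * n)) w) < e0" using zc by simp
    define g where "g = (T ^^ (t * n)) w"
    define h where "h = g - w"
    have hH: "h \<in> H" unfolding h_def g_def using K[OF w(1)] .
    have "dist c g < dc" using w1 e0 unfolding g_def by simp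
    moreover have "dist g g < dc" using dc(1) by simp
    ultimately have "dist (c - g) (g - g) < db" using dc(2) by blast
    then have 1: "dist (c - g) 0 < db" by simp
    have 2: "dist w 0 < db" using w0 e0 by (simp add: dist_commute)
    have "dist ((c - g) + w) (0 + 0) < da" using db(2) 1 2 by blast
    then have 3: "dist (c - h) 0 < da" unfolding h_def by (simp add: algebra_simps)
    have "dist h h < da" using da(1) by simp
    then have "dist ((c - h) + h) (0 + h) < \<delta>" using da(2) 3 by blast
    then have "dist h c < \<delta>" by (simp add: dist_commute)
    then show "\<exists>y\<in>H. dist y c < \<delta>" using hH by blast
  qed
  then have "c \<in> H" using clH by (simp add: closure_closed)
  then show ?thesis unfolding H_def F_def by blast
qed



lemma card_compl_real:
  assumes "X \<subseteq> {A..<B::nat}"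
  shows "real (card ({A..<B} - X)) = real (B - A) - real (card X)"
proof -
  have f: "finite X" using assms finite_subset by blast
  have "card ({A..<B} - X) = card {A..<B} - card X" using assms f by (simp add: card_Diff_subset)
  moreover have "card X \<le> card {A..<B}" using assms by (metis card_mono finite_atLeastLessThan)
  ultimately show ?thesis by simp
qed

lemma count_lemma:
  fixes A B l g :: nat and eps e1 eY :: real
  assumes AB: "A < B" and lg: "g < l" and gle: "real g \<le> (eps/3) * real l"
    and eY: "eY \<le> eps/3" "0 \<le> eY" and e1: "e1 \<le> eps/3"
    and s_def: "\<And>q. s q = A + q * l"
    and e_def: "\<And>q. e q = (if A + (q+1) * l < B then A + (q+1) * l - g else B)"
    and Gd: "Gd \<subseteq> {A..<B}" "real (card Gd) > (1 - e1) * real (B - A)"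
    and Yg: "\<And>q. q * l < B - A \<Longrightarrow> Yg q \<subseteq> {s q..<e q} \<and> real (card (Yg q)) > (1 - eY) * real (e q - s q)"
    and KC: "\<And>q j. q * l < B - A \<Longrightarrow> j \<in> Yg q \<Longrightarrow> j \<in> Gd \<Longrightarrow> j \<in> F"
    and F: "F \<subseteq> {A..<B}"
  shows "real (card F) > (1 - eps) * real (B - A)"
proof -
  define L where "L = B - A"
  have l0: "l > 0" using lg by simp
  define Qs where "Qs = {q. q * l < L}"
  define Qi where "Qi = {q. (q + 1) * l < L}"
  have "Qs \<subseteq> {..<L}"
  proof
    fix q assume "q \<in> Qs"
    then have "q * l < L" unfolding Qs_def by simp
    moreover have "q \<le> q * l" using l0 by simp
    ultimately show "q \<in> {..<L}" by (metis le_less_trans lessThan_iff)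
  qed
  then have finQs: "finite Qs" using finite_subset by blast
  have L1: "L \<ge> 1" using AB L_def by simp
  have Qi_eq: "Qi = {..<(L - 1) div l}"
  proof -
    have iff: "(q + 1) * l < L \<longleftrightarrow> q + 1 \<le> (L - 1) div l" for q
    proof -
      have "q + 1 \<le> (L - 1) div l \<longleftrightarrow> (q + 1) * l \<le> L - 1"
        using l0 by (rule less_eq_div_iff_mult_less_eq)
      then show ?thesis using L1 by linarith
    qed
    show ?thesis
    proof (rule set_eqI)
      fix q show "q \<in> Qi \<longleftrightarrow> q \<in> {..<(L - 1) div l}"
        unfolding Qi_def mem_Collect_eq lessThan_iff using iff[of q] by linarith
    qed
  qed
  have cQi: "card Qi * l \<le> L - 1" unfolding Qi_eq by (simp add: div_times_less_eq_dividend)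
  define NG where "NG = {A..<B} - Gd"
  define Yb where "Yb q = {s q..<e q} - Yg q" for q
  define Gap where "Gap q = {e q..<e q + g}" for q
  have es: "s q < e q \<and> e q \<le> B \<and> A \<le> s q \<and> e q \<le> s q + l" if "q \<in> Qs" for q
  proof -
    have ql: "(q+1)*l = q*l + l" by simp
    have qL: "q * l < B - A" using that unfolding Qs_def L_def by simp
    show ?thesis
    proof (cases "A + (q+1)*l < B")
      case True
      then have "e q = A + (q+1)*l - g" using e_def by simp
      then show ?thesis using True lg ql s_def[of q] by linarith
    next
      case False
      then have "e q = B" using e_def by simp
      then show ?thesis using False qL ql s_def[of q] by linarith
    qed
  qed
  have cover: "{A..<B} - F \<subseteq> NG \<union> (\<Union>q\<in>Qs. Yb q) \<union> (\<Union>q\<in>Qi. Gap q)"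
  proof
    fix j assume j: "j \<in> {A..<B} - F"
    show "j \<in> NG \<union> (\<Union>q\<in>Qs. Yb q) \<union> (\<Union>q\<in>Qi. Gap q)"
    proof (cases "j \<in> Gd")
      case False then show ?thesis using j unfolding NG_def by auto
    next
      case True
      define q where "q = (j - A) div l"
      have q1: "q * l \<le> j - A" unfolding q_def by (simp add: div_times_less_eq_dividend)
      have q2: "j - A < (q + 1) * l" unfolding q_def using l0
        by (metis add.commute dividend_less_div_times mult.commute mult_Suc_right plus_1_eq_Suc)
      have jA: "A \<le> j" "j < B" using j by auto
      have "q * l < B - A" using q1 jA by linarith
      then have qQs: "q \<in> Qs" unfolding Qs_def L_def by simp
      have sj: "s q \<le> j" using q1 jA s_def by simp
      show ?thesis
      proof (cases "j < e q")
        case True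
        have "j \<notin> Yg q" using KC[of q j] qQs \<open>j \<in> Gd\<close> j unfolding Qs_def L_def by auto
        then have "j \<in> Yb q" unfolding Yb_def using sj True by simp
        then show ?thesis using qQs by blast
      next
        case False
        then have int: "A + (q + 1) * l < B" using jA e_def[of q] by (auto split: if_splits)
        then have eq: "e q = A + (q + 1) * l - g" using e_def by simp
        have "(q + 1) * l < B - A" using int by linarith
        then have "q \<in> Qi" unfolding Qi_def L_def by simp
        moreover have "j \<in> Gap q"
        proof -
          have "g \<le> (q + 1) * l" using lg by simp
          then show ?thesis unfolding Gap_def using False eq q2 jA by simp
        qed
        ultimately show ?thesis by blast
      qed
    qed
  qed
  have cNG: "real (card NG) < e1 * real L"
  proof -
    have "(1 - e1) * real L = real L - e1 * real L" by (simp add: algebra_simps)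
    then show ?thesis using card_compl_real[OF Gd(1)] Gd(2) unfolding NG_def L_def by linarith
  qed
  have cYb: "real (card (Yb q)) \<le> eY * real (e q - s q)" if "q \<in> Qs" for q
  proof -
    have "Yg q \<subseteq> {s q..<e q}" "real (card (Yg q)) > (1 - eY) * real (e q - s q)"
      using Yg[of q] that unfolding Qs_def L_def by auto
    moreover have "(1 - eY) * real (e q - s q) = real (e q - s q) - eY * real (e q - s q)" by (simp add: algebra_simps)
    ultimately show ?thesis using card_compl_real[of "Yg q" "s q" "e q"] unfolding Yb_def by linarith
  qed
  have disj: "{s q..<e q} \<inter> {s q'..<e q'} = {}" if "q \<in> Qs" "q' \<in> Qs" "q \<noteq> q'" for q q'
  proof -
    have "e q \<le> s q'" if "q \<in> Qs" "q' \<in> Qs" "q < q'" for q q'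
    proof -
      have "q + 1 \<le> q'" using that by simp
      then have "(q + 1) * l \<le> q' * l" by (rule mult_le_mono1)
      moreover have "q' * l < B - A" using that unfolding Qs_def L_def by simp
      ultimately have "A + (q + 1) * l < B" by linarith
      then show ?thesis using e_def[of q] s_def[of q'] \<open>(q + 1) * l \<le> q' * l\<close> by simp
    qed
    note H = this
    from \<open>q \<noteq> q'\<close> consider "q < q'" | "q' < q" by linarith
    then show ?thesis
    proof cases
      case 1 then show ?thesis using H[of q q'] that by auto
    next
      case 2 then show ?thesis using H[of q' q] that by auto
    qed
  qed
  have sumL: "(\<Sum>q\<in>Qs. e q - s q) \<le> L"
  proof -
    have "(\<Sum>q\<in>Qs. e q - s q) = (\<Sum>q\<in>Qs. card {s q..<e q})" by simp
    also have "\<dots> = card (\<Union>q\<in>Qs. {s q..<e q})"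
      using finQs disj by (intro card_UN_disjoint[symmetric]) auto
    also have "\<dots> \<le> card {A..<B}"
    proof (rule card_mono)
      show "(\<Union>q\<in>Qs. {s q..<e q}) \<subseteq> {A..<B}"
      proof
        fix x assume "x \<in> (\<Union>q\<in>Qs. {s q..<e q})"
        then obtain q where "q \<in> Qs" "s q \<le> x" "x < e q" by auto
        then show "x \<in> {A..<B}" using es[of q] by auto
      qed
    qed simp
    finally show ?thesis unfolding L_def by simp
  qed
  have "card ({A..<B} - F) \<le> card (NG \<union> (\<Union>q\<in>Qs. Yb q) \<union> (\<Union>q\<in>Qi. Gap q))"
    by (rule card_mono[OF _ cover]) (simp add: NG_def Yb_def Gap_def finQs Qi_eq)
  also have "\<dots> \<le> card NG + card (\<Union>q\<in>Qs. Yb q) + card (\<Union>q\<in>Qi. Gap q)"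
    by (meson add_le_mono card_Un_le le_trans order_refl)
  also have "\<dots> \<le> card NG + (\<Sum>q\<in>Qs. card (Yb q)) + (\<Sum>q\<in>Qi. card (Gap q))"
    using finQs by (intro add_mono card_UN_le) (auto simp: Qi_eq)
  finally have "real (card ({A..<B} - F)) \<le> real (card NG + (\<Sum>q\<in>Qs. card (Yb q)) + (\<Sum>q\<in>Qi. card (Gap q)))"
    by (simp only: of_nat_le_iff)
  then have c1: "real (card ({A..<B} - F)) \<le> real (card NG) + (\<Sum>q\<in>Qs. real (card (Yb q))) + (\<Sum>q\<in>Qi. real (card (Gap q)))"
    by (simp add: of_nat_sum)
  have "(\<Sum>q\<in>Qs. real (card (Yb q))) \<le> (\<Sum>q\<in>Qs. eY * real (e q - s q))"
    by (rule sum_mono) (rule cYb)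
  also have "\<dots> = eY * real (\<Sum>q\<in>Qs. e q - s q)" by (simp add: sum_distrib_left)
  also have "\<dots> \<le> eY * real L"
  proof -
    have "real (\<Sum>q\<in>Qs. e q - s q) \<le> real L" using sumL by (simp only: of_nat_le_iff)
    then show ?thesis using eY(2) by (rule mult_left_mono)
  qed
  finally have c2: "(\<Sum>q\<in>Qs. real (card (Yb q))) \<le> eY * real L" .
  have "(\<Sum>q\<in>Qi. real (card (Gap q))) = real (card Qi) * real g" unfolding Gap_def by simp
  also have "\<dots> \<le> real (card Qi) * ((eps/3) * real l)" using gle by (intro mult_left_mono) auto
  also have "\<dots> = (eps/3) * real (card Qi * l)" by simp
  also have "\<dots> \<le> (eps/3) * real L"
  proof -
    have "eps \<ge> 0" using eY by simp
    moreover have "card Qi * l \<le> L" using cQi by linarith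
    then have "real (card Qi * l) \<le> real L" by (simp only: of_nat_le_iff)
    ultimately show ?thesis by (intro mult_left_mono) auto
  qed
  finally have c3: "(\<Sum>q\<in>Qi. real (card (Gap q))) \<le> (eps/3) * real L" .
  have "real (card ({A..<B} - F)) < eps * real L"
  proof -
    have "e1 * real L \<le> (eps/3) * real L" using e1 by (intro mult_right_mono) auto
    moreover have "eY * real L \<le> (eps/3) * real L" using eY by (intro mult_right_mono) auto
    ultimately show ?thesis using c1 c2 c3 cNG by linarith
  qed
  moreover have "(1 - eps) * real L = real L - eps * real L" by (simp add: algebra_simps)
  ultimately show ?thesis using card_compl_real[OF F] unfolding L_def by linarith
qed



theorem proposition4p5:
  fixes T :: "'x::{topological_ab_group_add, metric_space} \<Rightarrow> 'x"
    and Y :: "'x set" and P :: "nat set"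
  assumes "compact (UNIV :: 'x set)"
    and "bij T" and "\<forall>x y. T (x + y) = T x + T y" and "continuous_on UNIV T"
    and "closed Y" and "0 \<in> Y" and "\<forall>x\<in>Y. \<forall>y\<in>Y. x - y \<in> Y" and "T ` Y = Y"
    and "bounded_gaps P"
    and "partial_specification Y T dist P"
    and "partial_specification (cosets Y) (\<lambda>C. T ` C) hausdorff_dist P"
  shows "partial_specification UNIV T dist P"
proof -
  note cpt = assms(1) and add = assms(3) and cont = assms(4) and Y0 = assms(6) and sub = assms(7)
    and TY = assms(8)
  have unb: "\<forall>m. \<exists>p\<in>P. m \<le> p" using bounded_gaps_unbounded[OF assms(9)] by blast
  have addk: "\<forall>x y. (T ^^ k) (x + y) = (T ^^ k) x + (T ^^ k) y" for k
    using funpow_additive[OF add] by blast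
  have minusk: "(T ^^ k) (x - y) = (T ^^ k) x - (T ^^ k) y" for k x y
    using additive_minus[OF addk] by blast
  have TkY: "(T ^^ k) ` Y = Y" for k using funpow_image_eq[OF TY] .
  have TkYin: "(T ^^ k) y \<in> Y" if "y \<in> Y" for k y using TkY that by blast
  show ?thesis unfolding partial_specification_def
  proof (intro allI impI)
    fix \<epsilon> :: real assume \<epsilon>: "\<epsilon> > 0"
    obtain \<rho> where \<rho>: "\<rho> > 0" "\<forall>x x' y y' :: 'x. dist x x' < \<rho> \<longrightarrow> dist y y' < \<rho> \<longrightarrow> dist (x + y) (x' + y') < \<epsilon>"
      using uc_add[OF cpt \<epsilon>] by blast
    define eY where "eY = min (\<epsilon>/3) (\<rho>/2)"
    have eY: "eY > 0" "eY \<le> \<epsilon>/3" "eY \<le> \<rho>/2" using \<epsilon> \<rho> unfolding eY_def by auto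
    obtain NY MY where HY: "\<forall>r z a b. spaced_spec Y MY r z a b \<longrightarrow>
        (\<forall>n\<in>P. n \<ge> NY \<and> real n \<ge> (1 + eY) * real (b (r - 1)) \<longrightarrow>
           (\<exists>w\<in>Y. (T ^^ n) w = w \<and> partially_traces T dist eY r z a b w))"
      using assms(10)[unfolded partial_specification_def, rule_format, OF eY(1)]
      by (elim exE) (rule that, assumption)
    define g where "g = MY + 1"
    define l where "l = nat \<lceil>3 * real g / \<epsilon>\<rceil> + g + 1"
    have lg: "g < l" unfolding l_def by simp
    have gle: "real g \<le> (\<epsilon>/3) * real l"
    proof -
      have "3 * real g / \<epsilon> \<le> real (nat \<lceil>3 * real g / \<epsilon>\<rceil>)" by (rule real_nat_ceiling_ge)
      also have "\<dots> \<le> real l" unfolding l_def by simp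
      finally have "(\<epsilon>/3) * (3 * real g / \<epsilon>) \<le> (\<epsilon>/3) * real l" using \<epsilon> by (intro mult_left_mono) auto
      then show ?thesis using \<epsilon> by simp
    qed
    obtain \<delta> where \<delta>: "\<delta> > 0" "\<forall>p q :: 'x. dist p q < \<delta> \<longrightarrow> (\<forall>k<l. dist ((T ^^ k) p) ((T ^^ k) q) < \<rho>/2)"
      using equicont[OF cpt cont, of "\<rho>/2" l] \<rho>(1) by auto
    obtain \<sigma> where \<sigma>: "\<sigma> > 0" "\<forall>x x' y y' :: 'x. dist x x' < \<sigma> \<longrightarrow> dist y y' < \<sigma> \<longrightarrow> dist (x - y) (x' - y') < \<delta>"
      using uc_diff[OF cpt \<delta>(1)] by blast
    define e1 where "e1 = min (\<epsilon>/3) \<sigma>"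
    have e1: "e1 > 0" "e1 \<le> \<epsilon>/3" "e1 \<le> \<sigma>" using \<epsilon> \<sigma> unfolding e1_def by auto
    obtain N1 M1 where H1: "\<forall>r z a b. spaced_spec (cosets Y) M1 r z a b \<longrightarrow>
        (\<forall>n\<in>P. n \<ge> N1 \<and> real n \<ge> (1 + e1) * real (b (r - 1)) \<longrightarrow>
           (\<exists>w\<in>cosets Y. ((\<lambda>C. T ` C) ^^ n) w = w \<and> partially_traces (\<lambda>C. T ` C) hausdorff_dist e1 r z a b w))"
      using assms(11)[unfolded partial_specification_def, rule_format, OF e1(1)]
      by (elim exE) (rule that, assumption)
    have main: "\<exists>w. (T ^^ n) w = w \<and> partially_traces T dist \<epsilon> r x a b w"
      if spc: "spaced_spec UNIV (max M1 MY) r x a b" and nP: "n \<in> P"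
        and nN: "max N1 NY + 1 \<le> n" and nb: "(1 + \<epsilon>) * real (b (r - 1)) \<le> real n" for r x a b n
    proof -
      have r1: "r \<ge> 1" and ab: "\<forall>i<r. a i < b i" using spc unfolding spaced_spec_def by auto
      have chain: "b i < a i' \<and> b i + max M1 MY \<le> a i'" if "i < i'" "i' < r" for i i'
        using spaced_chain[OF spc that] .
      have bmono: "b i \<le> b (r - 1)" if "i < r" for i
        using spaced_mono_b[OF spc that] that by simp
      have spc1: "spaced_spec (cosets Y) M1 r (\<lambda>i. (\<lambda>y. x i + y) ` Y) a b"
      proof -
        have "\<forall>i. Suc i < r \<longrightarrow> b i < a (Suc i) \<and> b i + M1 \<le> a (Suc i)"
        proof (intro allI impI)
          fix i assume "Suc i < r"
          then have "b i < a (Suc i) \<and> b i + max M1 MY \<le> a (Suc i)" using chain[of i "Suc i"] by simp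
          then show "b i < a (Suc i) \<and> b i + M1 \<le> a (Suc i)" by linarith
        qed
        moreover have "(\<lambda>y. x i + y) ` Y \<in> cosets Y" for i unfolding cosets_def by blast
        ultimately show ?thesis using r1 ab unfolding spaced_spec_def by blast
      qed
      have nN1: "N1 \<le> n" and nNY: "NY \<le> n" and n1: "n \<ge> 1" using nN by auto
      have nb1: "(1 + e1) * real (b (r - 1)) \<le> real n"
      proof -
        have "(1 + e1) * real (b (r - 1)) \<le> (1 + \<epsilon>) * real (b (r - 1))"
          using e1 \<epsilon> by (intro mult_right_mono) auto
        then show ?thesis using nb by linarith
      qed
      have nbY: "(1 + eY) * real (b (r - 1)) \<le> real n"
      proof -
        have "(1 + eY) * real (b (r - 1)) \<le> (1 + \<epsilon>) * real (b (r - 1))"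
          using eY \<epsilon> by (intro mult_right_mono) auto
        then show ?thesis using nb by linarith
      qed
      have "\<exists>C\<in>cosets Y. ((\<lambda>C. T ` C) ^^ n) C = C \<and>
          partially_traces (\<lambda>C. T ` C) hausdorff_dist e1 r (\<lambda>i. (\<lambda>y. x i + y) ` Y) a b C"
        using H1[rule_format, OF spc1 nP] nN1 nb1 by simp
      then obtain C where C: "C \<in> cosets Y" "((\<lambda>C. T ` C) ^^ n) C = C"
          "partially_traces (\<lambda>C. T ` C) hausdorff_dist e1 r (\<lambda>i. (\<lambda>y. x i + y) ` Y) a b C"
        by blast
      obtain u0 where u0: "C = (\<lambda>y. u0 + y) ` Y" using C(1) unfolding cosets_def by blast
      have TnC: "(T ^^ n) ` C = C" using C(2) funpow_image_iter by metis
      have "u0 \<in> C" using u0 Y0 by force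
      then have "(T ^^ n) u0 \<in> C" using TnC by blast
      then obtain c0 where c0: "c0 \<in> Y" "(T ^^ n) u0 = u0 + c0" using u0 by blast
      have "0 - c0 \<in> Y" using sub Y0 c0 by blast
      then obtain y1 where y1: "y1 \<in> Y" "(T ^^ n) y1 - y1 = 0 - c0"
        using surj_Tn[OF cpt add cont assms(5) Y0 sub TY unb assms(10) n1] by blast
      define u where "u = u0 + y1"
      have Tnu: "(T ^^ n) u = u"
      proof -
        have "(T ^^ n) u = (T ^^ n) u0 + (T ^^ n) y1" unfolding u_def using addk by blast
        also have "\<dots> = u0 + c0 + (y1 - c0)" using c0 y1 by (simp add: algebra_simps)
        finally show ?thesis unfolding u_def by simp
      qed
      define G where "G i j \<longleftrightarrow> hausdorff_dist ((T ^^ j) ` ((\<lambda>y. x i + y) ` Y)) ((T ^^ j) ` C) < e1" for i j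
      have Gcard: "real (card {j \<in> {a i..<b i}. G i j}) > (1 - e1) * real (b i - a i)" if "i < r" for i
        using C(3) that unfolding partially_traces_def G_def funpow_image_iter by simp
      have Gclose: "\<exists>y\<in>Y. dist ((T ^^ j) (x i)) ((T ^^ j) u + y) < e1" if Gij: "G i j" for i j
      proof -
        have xin: "(T ^^ j) (x i) \<in> (T ^^ j) ` ((\<lambda>y. x i + y) ` Y)"
          using Y0 by (metis add.right_neutral image_eqI)
        have "(T ^^ j) ` C \<noteq> {}" using \<open>u0 \<in> C\<close> by blast
        then obtain q where q: "q \<in> (T ^^ j) ` C" "dist ((T ^^ j) (x i)) q < e1"
          using hausdorff_close[OF cpt xin _ Gij[unfolded G_def]] by blast
        then obtain y' where y': "y' \<in> Y" "q = (T ^^ j) (u0 + y')" using u0 by blast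
        have "q = (T ^^ j) u + ((T ^^ j) y' - (T ^^ j) y1)"
        proof -
          have "q = (T ^^ j) u0 + (T ^^ j) y'" using y' addk by blast
          moreover have "(T ^^ j) u = (T ^^ j) u0 + (T ^^ j) y1" unfolding u_def using addk by blast
          ultimately show ?thesis by (simp add: algebra_simps)
        qed
        moreover have "(T ^^ j) y' - (T ^^ j) y1 \<in> Y" using sub TkYin y'(1) y1(1) by blast
        ultimately show ?thesis using q(2) by metis
      qed
      define Yp where "Yp i j = (SOME y. y \<in> Y \<and> dist ((T ^^ j) (x i)) ((T ^^ j) u + y) < e1)" for i j
      have Yp: "Yp i j \<in> Y \<and> dist ((T ^^ j) (x i)) ((T ^^ j) u + Yp i j) < e1" if "G i j" for i j
        unfolding Yp_def using someI_ex[OF Gclose[OF that, unfolded Bex_def]] .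
      define s where "s p = a (fst p) + snd p * l" for p :: "nat \<times> nat"
      define e where "e p = (if a (fst p) + (snd p + 1) * l < b (fst p) then a (fst p) + (snd p + 1) * l - g else b (fst p))" for p :: "nat \<times> nat"
      define J where "J = {p. fst p < r \<and> snd p * l < b (fst p) - a (fst p)}"
      define ex where "ex p \<longleftrightarrow> (\<exists>j. s p \<le> j \<and> j < e p \<and> G (fst p) j)" for p
      define j0 where "j0 p = (LEAST j. s p \<le> j \<and> j < e p \<and> G (fst p) j)" for p
      define z where "z p = (if ex p then (SOME y. y \<in> Y \<and> (T ^^ (j0 p)) y = Yp (fst p) (j0 p)) else 0)" for p
      have es: "s p < e p \<and> e p \<le> b (fst p) \<and> a (fst p) \<le> s p \<and> e p \<le> s p + l" if "p \<in> J" for p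
      proof -
        have ql: "(snd p + 1) * l = snd p * l + l" by simp
        have qL: "snd p * l < b (fst p) - a (fst p)" using that unfolding J_def by simp
        show ?thesis
        proof (cases "a (fst p) + (snd p + 1) * l < b (fst p)")
          case True
          then have "e p = a (fst p) + (snd p + 1) * l - g" using e_def by simp
          then show ?thesis using True lg ql s_def[of p] by linarith
        next
          case False
          then have "e p = b (fst p)" using e_def by simp
          then show ?thesis using False qL ql s_def[of p] by linarith
        qed
      qed
      have j0: "s p \<le> j0 p \<and> j0 p < e p \<and> G (fst p) (j0 p) \<and> (\<forall>j. s p \<le> j \<and> j < e p \<and> G (fst p) j \<longrightarrow> j0 p \<le> j)"
        if exp: "ex p" for p
      proof -
        define Pp where "Pp = (\<lambda>j. s p \<le> j \<and> j < e p \<and> G (fst p) j)"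
        obtain j where j: "Pp j" using exp unfolding ex_def Pp_def by blast
        have jl: "j0 p = Least Pp" unfolding j0_def Pp_def by simp
        have A: "Pp (j0 p)" unfolding jl using j by (rule LeastI)
        have B: "j0 p \<le> j'" if "Pp j'" for j' unfolding jl using that by (rule Least_le)
        have A': "s p \<le> j0 p" "j0 p < e p" "G (fst p) (j0 p)" using A unfolding Pp_def by auto
        show ?thesis using A' B unfolding Pp_def by blast
      qed
      have zprop: "z p \<in> Y \<and> (T ^^ (j0 p)) (z p) = Yp (fst p) (j0 p)" if exp: "ex p" for p
      proof -
        have "Yp (fst p) (j0 p) \<in> Y" using Yp j0[OF exp] by blast
        then have "Yp (fst p) (j0 p) \<in> (T ^^ (j0 p)) ` Y" using TkY[of "j0 p"] by simp
        then obtain y where "y \<in> Y" "Yp (fst p) (j0 p) = (T ^^ (j0 p)) y" by (rule imageE)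
        then have ex1: "\<exists>y. y \<in> Y \<and> (T ^^ (j0 p)) y = Yp (fst p) (j0 p)" by metis
        have zeq: "z p = (SOME y. y \<in> Y \<and> (T ^^ (j0 p)) y = Yp (fst p) (j0 p))"
          using exp unfolding z_def by simp
        show ?thesis unfolding zeq by (rule someI_ex[OF ex1])
      qed
      have zY: "z p \<in> Y" for p
      proof (cases "ex p")
        case True then show ?thesis using zprop by blast
      next
        case False then show ?thesis using Y0 unfolding z_def by simp
      qed
      have ord: "e p < s p' \<and> e p + MY \<le> s p'"
        if pJ: "p \<in> J" and p'J: "p' \<in> J" and lex: "fst p < fst p' \<or> (fst p = fst p' \<and> snd p < snd p')" for p p'
      proof (cases "fst p < fst p'")
        case True
        have "fst p' < r" using p'J unfolding J_def by simp
        then have "b (fst p) < a (fst p') \<and> b (fst p) + max M1 MY \<le> a (fst p')" using chain True by blast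
        moreover have "e p \<le> b (fst p)" "a (fst p') \<le> s p'" using es pJ p'J by auto
        ultimately show ?thesis by linarith
      next
        case False
        then have eqf: "fst p = fst p'" and lt: "snd p < snd p'" using lex by auto
        have "snd p + 1 \<le> snd p'" using lt by simp
        then have le1: "(snd p + 1) * l \<le> snd p' * l" by (rule mult_le_mono1)
        moreover have "snd p' * l < b (fst p) - a (fst p)" using p'J eqf unfolding J_def by simp
        ultimately have int: "a (fst p) + (snd p + 1) * l < b (fst p)" by linarith
        then have "e p = a (fst p) + (snd p + 1) * l - g" unfolding e_def by simp
        moreover have "s p' = a (fst p) + snd p' * l" unfolding s_def using eqf by simp
        moreover have "l \<le> (snd p + 1) * l" by simp
        ultimately show ?thesis using le1 lg unfolding g_def by linarith
      qed
      have lex_cases: "fst p < fst p' \<or> (fst p = fst p' \<and> snd p < snd p') \<or>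
          fst p' < fst p \<or> (fst p' = fst p \<and> snd p' < snd p)" if "p \<noteq> p'" for p p' :: "nat \<times> nat"
        using that by (cases p, cases p') auto
      have spJ: "\<forall>p\<in>J. \<forall>p'\<in>J. s p < s p' \<longrightarrow> e p < s p' \<and> e p + MY \<le> s p'"
      proof (intro ballI impI)
        fix p p' assume pJ: "p \<in> J" and p'J: "p' \<in> J" and lt: "s p < s p'"
        have "p \<noteq> p'" using lt by auto
        moreover have False if "fst p' < fst p \<or> (fst p' = fst p \<and> snd p' < snd p)"
          using ord[OF p'J pJ that] es[OF p'J] lt by linarith
        ultimately show "e p < s p' \<and> e p + MY \<le> s p'" using ord[OF pJ p'J] lex_cases by blast
      qed
      have injs: "inj_on s J"
      proof (rule inj_onI)
        fix p p' assume pJ: "p \<in> J" and p'J: "p' \<in> J" and eq: "s p = s p'"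
        show "p = p'"
        proof (rule ccontr)
          assume "p \<noteq> p'"
          then consider "fst p < fst p' \<or> (fst p = fst p' \<and> snd p < snd p')"
            | "fst p' < fst p \<or> (fst p' = fst p \<and> snd p' < snd p)" using lex_cases by blast
          then show False
          proof cases
            case 1 then show False using ord[OF pJ p'J] es[OF pJ] eq by linarith
          next
            case 2 then show False using ord[OF p'J pJ] es[OF p'J] eq by linarith
          qed
        qed
      qed
      have finJ: "finite J"
      proof (rule finite_subset)
        show "J \<subseteq> {..<r} \<times> {..<b (r - 1)}"
        proof
          fix p assume pJ: "p \<in> J"
          then have i: "fst p < r" and q: "snd p * l < b (fst p) - a (fst p)" unfolding J_def by auto
          have "snd p \<le> snd p * l" using lg by simp
          moreover have "b (fst p) \<le> b (r - 1)" using bmono i by blast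
          ultimately have "snd p < b (r - 1)" using q by linarith
          then show "p \<in> {..<r} \<times> {..<b (r - 1)}" using i by (cases p) auto
        qed
      qed simp
      have J0: "(0, 0) \<in> J" using r1 ab unfolding J_def by auto
      have zsJ: "\<forall>p\<in>J. z p \<in> Y \<and> s p < e p \<and> e p \<le> b (r - 1)"
      proof
        fix p assume pJ: "p \<in> J"
        then have "fst p < r" unfolding J_def by simp
        then show "z p \<in> Y \<and> s p < e p \<and> e p \<le> b (r - 1)" using zY es[OF pJ] bmono by (meson le_trans)
      qed
      obtain wY where wY: "wY \<in> Y" "(T ^^ n) wY = wY"
        "\<forall>p\<in>J. real (card {k \<in> {s p..<e p}. dist ((T ^^ k) (z p)) ((T ^^ k) wY) < eY}) > (1 - eY) * real (e p - s p)"
        using spec_family[OF HY eY(1) finJ _ zsJ spJ injs nP nNY nbY] J0 by blast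
      define w where "w = u + wY"
      have Tnw: "(T ^^ n) w = w" unfolding w_def using addk Tnu wY(2) by simp
      have KC: "dist ((T ^^ j) (x (fst p))) ((T ^^ j) w) < \<epsilon>"
        if pJ: "p \<in> J" and j1: "s p \<le> j" and j2: "j < e p" and Gj: "G (fst p) j"
          and dj: "dist ((T ^^ j) (z p)) ((T ^^ j) wY) < eY" for p j
      proof -
        define i where "i = fst p"
        have exp: "ex p" unfolding ex_def using j1 j2 Gj by blast
        note J0p = j0[OF exp] and Zp = zprop[OF exp]
        define j' where "j' = j0 p"
        define y0 where "y0 = Yp i j'"
        have j'le: "j' \<le> j" using J0p j1 j2 Gj unfolding j'_def by blast
        have "j < s p + l" using es[OF pJ] j2 by linarith
        moreover have "s p \<le> j'" using J0p unfolding j'_def by blast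
        ultimately have kl: "j - j' < l" using j'le by linarith
        have Gj': "G i j'" using J0p unfolding i_def j'_def by blast
        have y0: "dist ((T ^^ j') (x i)) ((T ^^ j') u + y0) < e1" using Yp[OF Gj'] unfolding y0_def by blast
        have Tz: "(T ^^ j') (z p) = y0" using Zp unfolding y0_def i_def j'_def by blast
        have "dist ((T ^^ j') (x i) - (T ^^ j') u) (((T ^^ j') u + y0) - (T ^^ j') u) < \<delta>"
        proof -
          have "dist ((T ^^ j') (x i)) ((T ^^ j') u + y0) < \<sigma>" using y0 e1 by linarith
          moreover have "dist ((T ^^ j') u) ((T ^^ j') u) < \<sigma>" using \<sigma>(1) by simp
          ultimately show ?thesis using \<sigma>(2) by blast
        qed
        then have "dist ((T ^^ j') (x i - u)) y0 < \<delta>" using minusk by simp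
        then have "dist ((T ^^ (j - j')) ((T ^^ j') (x i - u))) ((T ^^ (j - j')) y0) < \<rho>/2"
          using \<delta>(2) kl by blast
        moreover have "(T ^^ (j - j')) ((T ^^ j') v) = (T ^^ j) v" for v
        proof -
          have "(T ^^ (j - j' + j')) v = (T ^^ (j - j')) ((T ^^ j') v)" by (simp add: funpow_add)
          then show ?thesis using j'le by simp
        qed
        ultimately have d1: "dist ((T ^^ j) (x i - u)) ((T ^^ j) (z p)) < \<rho>/2" using Tz by metis
        have d2: "dist ((T ^^ j) (z p)) ((T ^^ j) wY) < \<rho>/2" using dj eY by linarith
        have "dist ((T ^^ j) (x i - u)) ((T ^^ j) wY) < \<rho>"
          using dist_triangle[of "(T ^^ j) (x i - u)" "(T ^^ j) wY" "(T ^^ j) (z p)"] d1 d2 by linarith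
        then have "dist ((T ^^ j) (x i) - (T ^^ j) u) ((T ^^ j) wY) < \<rho>" using minusk by simp
        moreover have "dist ((T ^^ j) u) ((T ^^ j) u) < \<rho>" using \<rho>(1) by simp
        ultimately have "dist ((T ^^ j) u + ((T ^^ j) (x i) - (T ^^ j) u)) ((T ^^ j) u + (T ^^ j) wY) < \<epsilon>"
          using \<rho>(2) by blast
        moreover have "(T ^^ j) w = (T ^^ j) u + (T ^^ j) wY" unfolding w_def using addk by blast
        ultimately show ?thesis unfolding i_def by simp
      qed
      have "partially_traces T dist \<epsilon> r x a b w"
        unfolding partially_traces_def
      proof (intro allI impI)
        fix i assume i: "i < r"
        show "real (card {n \<in> {a i..<b i}. dist ((T ^^ n) (x i)) ((T ^^ n) w) < \<epsilon>}) > (1 - \<epsilon>) * real (b i - a i)"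
        proof (rule count_lemma[where l = l and g = g and eY = eY and ?e1.0 = e1
              and s = "\<lambda>q. s (i, q)" and e = "\<lambda>q. e (i, q)"
              and Gd = "{j \<in> {a i..<b i}. G i j}"
              and Yg = "\<lambda>q. {k \<in> {s (i, q)..<e (i, q)}. dist ((T ^^ k) (z (i, q))) ((T ^^ k) wY) < eY}"])
          show "a i < b i" using ab i by blast
          show "g < l" by (rule lg)
          show "real g \<le> \<epsilon> / 3 * real l" by (rule gle)
          show "eY \<le> \<epsilon> / 3" "0 \<le> eY" using eY by auto
          show "e1 \<le> \<epsilon> / 3" using e1 by auto
          show "\<And>q. s (i, q) = a i + q * l" unfolding s_def by simp
          show "\<And>q. e (i, q) = (if a i + (q + 1) * l < b i then a i + (q + 1) * l - g else b i)"
            unfolding e_def by simp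
          show "{j \<in> {a i..<b i}. G i j} \<subseteq> {a i..<b i}" by blast
          show "(1 - e1) * real (b i - a i) < real (card {j \<in> {a i..<b i}. G i j})" using Gcard i by blast
          show "{n \<in> {a i..<b i}. dist ((T ^^ n) (x i)) ((T ^^ n) w) < \<epsilon>} \<subseteq> {a i..<b i}" by blast
        next
          fix q assume q: "q * l < b i - a i"
          then have "(i, q) \<in> J" unfolding J_def using i by simp
          then show "{k \<in> {s (i, q)..<e (i, q)}. dist ((T ^^ k) (z (i, q))) ((T ^^ k) wY) < eY} \<subseteq> {s (i, q)..<e (i, q)} \<and>
              (1 - eY) * real (e (i, q) - s (i, q)) < real (card {k \<in> {s (i, q)..<e (i, q)}. dist ((T ^^ k) (z (i, q))) ((T ^^ k) wY) < eY})"
            using wY(3) by auto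
        next
          fix q j assume q: "q * l < b i - a i"
            and jY: "j \<in> {k \<in> {s (i, q)..<e (i, q)}. dist ((T ^^ k) (z (i, q))) ((T ^^ k) wY) < eY}"
            and jG: "j \<in> {j \<in> {a i..<b i}. G i j}"
          have pJ: "(i, q) \<in> J" unfolding J_def using i q by simp
          have "dist ((T ^^ j) (x (fst (i, q)))) ((T ^^ j) w) < \<epsilon>"
            using KC[OF pJ] jY jG by auto
          then show "j \<in> {n \<in> {a i..<b i}. dist ((T ^^ n) (x i)) ((T ^^ n) w) < \<epsilon>}" using jG by simp
        qed
      qed
      then show ?thesis using Tnw by blast
    qed
    show "\<exists>N M::nat. \<forall>r z a b. spaced_spec UNIV M r z a b \<longrightarrow>
        (\<forall>n\<in>P. n \<ge> N \<and> real n \<ge> (1 + \<epsilon>) * real (b (r - 1)) \<longrightarrow>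
           (\<exists>w\<in>UNIV. (T ^^ n) w = w \<and> partially_traces T dist \<epsilon> r z a b w))"
      by (rule exI[of _ "max N1 NY + 1"], rule exI[of _ "max M1 MY"]) (use main in auto)
  qed
qed

end
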